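(* Let $K_{\hat\vartheta}=\sup_{x\in\mathbb{R}}|F_{\hat\vartheta}(x)-F_\vartheta(x)|$ with $\hat\vartheta=(\hat\mu,\hat\sigma)$. Then the distribution of $K_{\hat\vartheta}$ under $P_\vartheta$ does not depend on $\vartheta$ and $$K_{\hat\vartheta}\overset{d}{=}\max\{U,V\},$$ where $U=1-\exp\{-S\}$ and $$V=|1-T|\exp\Big\{\frac{S-T\ln(T)}{T-1}\Big\}\big(\mathbb{1}_{\{T<1\}}+\mathbb{1}_{\{S<\ln(T)\}}\big),$$ with $S$ exponentially distributed with mean $1/n$ (i.e. $S\sim F_{(0,1/n)}$) and $T\sim\Gamma(m-1,1/m)$ independent. Consequently, for $p\in(0,1)$ and $d_p=d_p(m,n)$ the $(1-p)$-quantile of $K_{\hat\vartheta}$, the set $$B_4=\{(x,y)\in\mathbb{R}^2:\ |F_{\hat\vartheta}(x)-y|\le d_p\}$$ is a confidence band for $F_\vartheta$ with exact confidence level $1-p$.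
   Context: Let $1<m\le n$ be integers and $(R_1,\dots,R_m)\in\mathbb{N}_0^m$ with $\sum_{j=1}^mR_j=n-m$; set $\gamma_j=\sum_{i=j}^m(R_i+1)$. A sample of progressively type-II censored order statistics $X=(X_{1:m:n},\dots,X_{m:m:n})$ from an absolutely continuous cdf $F$ with density $f$ has joint density $\prod_{j=1}^m\gamma_jf(x_j)[1-F(x_j)]^{R_j}$ on $x_1\le\dots\le x_m$. Here $F=F_\vartheta$ belongs to the exponential location-scale family: for $\vartheta=(\mu,\sigma)\in\Theta=\mathbb{R}\times(0,\infty)$, $F_\vartheta(x)=1-\exp\{-(x-\mu)/\sigma\}$ for $x>\mu$ and $F_\vartheta(x)=0$ for $x\le\mu$; $\vartheta$ is unknown and $P_\vartheta$ denotes the underlying probability. The MLEs are $\hat\mu=X_{1:m:n}$ and $\hat\sigma=\frac1m\sum_{j=2}^m\gamma_j(X_{j:m:n}-X_{j-1:m:n})$. $\Gamma(a,b)$ is the gamma distribution with shape $a$ and scale $b$. $\mathrm{graph}\,F=\{(t,F(t)):t\in\mathbb{R}\}$. A confidence band is a random subset $B$ of $\mathbb{R}^2$ such that $\{\mathrm{graph}\,F_\vartheta\subseteq B\}$ is measurable and the vertical sections $\{y:(t,y)\in B\}$ are a.s. intervals; it has exact confidence level $1-p$ if $P_\vartheta(\mathrm{graph}\,F_\vartheta\subseteq B)=1-p$ for all $\vartheta\in\Theta$. *)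

theory Defs
  imports "HOL-Probability.Probability"
begin

definition F_exp :: "real \<Rightarrow> real \<Rightarrow> real \<Rightarrow> real" where
  "F_exp \<mu> \<sigma> x = (if x \<le> \<mu> then 0 else 1 - exp (- (x - \<mu>) / \<sigma>))"

definition f_exp :: "real \<Rightarrow> real \<Rightarrow> real \<Rightarrow> real" where
  "f_exp \<mu> \<sigma> x = (if x \<le> \<mu> then 0 else exp (- (x - \<mu>) / \<sigma>) / \<sigma>)"

definition pc_gamma :: "nat \<Rightarrow> (nat \<Rightarrow> nat) \<Rightarrow> nat \<Rightarrow> real" where
  "pc_gamma m R j = (\<Sum>i=j..m. real (R i + 1))"

definition pc_density :: "nat \<Rightarrow> (nat \<Rightarrow> nat) \<Rightarrow> real \<Rightarrow> real \<Rightarrow> (nat \<Rightarrow> real) \<Rightarrow> real" where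
  "pc_density m R \<mu> \<sigma> x =
     (if (\<forall>j\<in>{1..<m}. x j \<le> x (Suc j))
      then (\<Prod>j=1..m. pc_gamma m R j * f_exp \<mu> \<sigma> (x j) * (1 - F_exp \<mu> \<sigma> (x j)) ^ R j)
      else 0)"

text \<open>The law P_theta of the progressively type-II censored sample, as a measure on R^{1..m}.\<close>
definition pc_sample :: "nat \<Rightarrow> (nat \<Rightarrow> nat) \<Rightarrow> real \<Rightarrow> real \<Rightarrow> (nat \<Rightarrow> real) measure" where
  "pc_sample m R \<mu> \<sigma> =
     density (PiM {1..m} (\<lambda>_. lborel)) (\<lambda>x. ennreal (pc_density m R \<mu> \<sigma> x))"

definition mu_hat :: "(nat \<Rightarrow> real) \<Rightarrow> real" where
  "mu_hat x = x 1"

definition sigma_hat :: "nat \<Rightarrow> (nat \<Rightarrow> nat) \<Rightarrow> (nat \<Rightarrow> real) \<Rightarrow> real" where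
  "sigma_hat m R x = (1 / real m) * (\<Sum>j=2..m. pc_gamma m R j * (x j - x (j - 1)))"

definition K_stat :: "nat \<Rightarrow> (nat \<Rightarrow> nat) \<Rightarrow> real \<Rightarrow> real \<Rightarrow> (nat \<Rightarrow> real) \<Rightarrow> real" where
  "K_stat m R \<mu> \<sigma> x =
     (SUP t. \<bar>F_exp (mu_hat x) (sigma_hat m R x) t - F_exp \<mu> \<sigma> t\<bar>)"

definition U_fun :: "real \<Rightarrow> real" where
  "U_fun s = 1 - exp (- s)"

definition V_fun :: "real \<Rightarrow> real \<Rightarrow> real" where
  "V_fun s t = \<bar>1 - t\<bar> * exp ((s - t * ln t) / (t - 1)) *
               (of_bool (t < 1) + of_bool (s < ln t))"

text \<open>Joint law of independent S ~ Exp(mean 1/n) and T ~ Gamma(shape m-1, scale 1/m)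
  (= Erlang with shape m-1 and rate m).\<close>
definition ST_law :: "nat \<Rightarrow> nat \<Rightarrow> (real \<times> real) measure" where
  "ST_law m n = density lborel (exponential_density (real n)) \<Otimes>\<^sub>M
                density lborel (erlang_density (m - 2) (real m))"

definition maxUV_law :: "nat \<Rightarrow> nat \<Rightarrow> real measure" where
  "maxUV_law m n = distr (ST_law m n) borel (\<lambda>(s, t). max (U_fun s) (V_fun s t))"

definition quantile :: "real measure \<Rightarrow> real \<Rightarrow> real" where
  "quantile M q = Inf {d. cdf M d \<ge> q}"

definition fgraph :: "(real \<Rightarrow> real) \<Rightarrow> (real \<times> real) set" where
  "fgraph F = {(t, F t) | t. True}"

definition exact_conf_band ::
  "(real \<Rightarrow> real \<Rightarrow> 'a measure) \<Rightarrow> (real \<Rightarrow> real \<Rightarrow> real \<Rightarrow> real)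
   \<Rightarrow> ('a \<Rightarrow> (real \<times> real) set) \<Rightarrow> real \<Rightarrow> bool" where
  "exact_conf_band P F B lvl \<longleftrightarrow>
     (\<forall>\<mu> \<sigma>. \<sigma> > 0 \<longrightarrow>
        {x \<in> space (P \<mu> \<sigma>). fgraph (F \<mu> \<sigma>) \<subseteq> B x} \<in> sets (P \<mu> \<sigma>) \<and>
        (AE x in P \<mu> \<sigma>. \<forall>t. is_interval {y. (t, y) \<in> B x}) \<and>
        measure (P \<mu> \<sigma>) {x \<in> space (P \<mu> \<sigma>). fgraph (F \<mu> \<sigma>) \<subseteq> B x} = lvl)"

definition band4 :: "nat \<Rightarrow> (nat \<Rightarrow> nat) \<Rightarrow> real \<Rightarrow> (nat \<Rightarrow> real) \<Rightarrow> (real \<times> real) set" where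
  "band4 m R d x = {(t, y). \<bar>F_exp (mu_hat x) (sigma_hat m R x) t - y\<bar> \<le> d}"

end

theory Submission
  imports Defs
begin



lemma L1:
  fixes g :: "real \<Rightarrow> ennreal"
  assumes g[measurable]: "g \<in> borel_measurable borel" and s: "\<sigma> > 0" and a: "a \<ge> \<mu>"
  shows "(\<integral>\<^sup>+ y. ennreal (if a \<le> y then real (Suc k) * f_exp \<mu> \<sigma> y * (1 - F_exp \<mu> \<sigma> y) ^ k else 0)
              * g (real (Suc k) * (y - a) / \<sigma>) \<partial>lborel)
       = ennreal (exp (- real (Suc k) * (a - \<mu>) / \<sigma>)) * (\<integral>\<^sup>+ z. ennreal (exponential_density 1 z) * g z \<partial>lborel)"
proof -
  define c where "c = real (Suc k)"
  have c: "c > 0" by (simp add: c_def)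
  define h where "h z = ennreal (exponential_density 1 z) * g z" for z
  have h[measurable]: "h \<in> borel_measurable borel" unfolding h_def by measurable
  have "(\<integral>\<^sup>+ y. ennreal (if a \<le> y then c * f_exp \<mu> \<sigma> y * (1 - F_exp \<mu> \<sigma> y) ^ k else 0)
              * g (c * (y - a) / \<sigma>) \<partial>lborel)
      = (\<integral>\<^sup>+ y. ennreal (exp (- c * (a - \<mu>) / \<sigma>)) * (ennreal (c / \<sigma>) * h (c * (y - a) / \<sigma>)) \<partial>lborel)"
  proof (rule nn_integral_cong_AE)
    show "AE y in lborel. ennreal (if a \<le> y then c * f_exp \<mu> \<sigma> y * (1 - F_exp \<mu> \<sigma> y) ^ k else 0) * g (c * (y - a) / \<sigma>) =
      ennreal (exp (- c * (a - \<mu>) / \<sigma>)) * (ennreal (c / \<sigma>) * h (c * (y - a) / \<sigma>))"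
      using AE_lborel_singleton[of \<mu>]
    proof eventually_elim
      case (elim y)
      show ?case
      proof (cases "a \<le> y")
        case True
        with elim a have ym: "y > \<mu>" by auto
        have "c * f_exp \<mu> \<sigma> y * (1 - F_exp \<mu> \<sigma> y) ^ k
              = c / \<sigma> * exp (- (y - \<mu>) / \<sigma>) ^ Suc k"
          using ym by (simp add: f_exp_def F_exp_def)
        also have "exp (- (y - \<mu>) / \<sigma>) ^ Suc k = exp (- c * (y - \<mu>) / \<sigma>)"
        proof -
          have e: "real (Suc k) * (- (y - \<mu>) / \<sigma>) = - c * (y - \<mu>) / \<sigma>" by (simp add: c_def algebra_simps)
          show ?thesis using exp_of_nat_mult[of "Suc k" "- (y - \<mu>) / \<sigma>"] e by metis
        qed
        also have "exp (- c * (y - \<mu>) / \<sigma>) = exp (- c * (a - \<mu>) / \<sigma>) * exp (- (c * (y - a) / \<sigma>))"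
          by (simp add: exp_add[symmetric] add_divide_distrib[symmetric] algebra_simps)
        finally have eq: "c * f_exp \<mu> \<sigma> y * (1 - F_exp \<mu> \<sigma> y) ^ k = 
            exp (- c * (a - \<mu>) / \<sigma>) * ((c / \<sigma>) * exponential_density 1 (c * (y - a) / \<sigma>))"
          using True c s by (simp add: exponential_density_def mult_ac not_less)
        have ed: "exponential_density 1 (c * (y - a) / \<sigma>) \<ge> 0" by (simp add: exponential_density_nonneg)
        have "ennreal (exp (- c * (a - \<mu>) / \<sigma>)) * (ennreal (c / \<sigma>) * (ennreal (exponential_density 1 (c * (y - a) / \<sigma>)) * g (c * (y - a) / \<sigma>)))
          = ennreal (exp (- c * (a - \<mu>) / \<sigma>) * ((c / \<sigma>) * exponential_density 1 (c * (y - a) / \<sigma>))) * g (c * (y - a) / \<sigma>)"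
        proof -
          have q: "0 \<le> c / \<sigma>" using c s by simp
          have qd: "0 \<le> c / \<sigma> * exponential_density 1 (c * (y - a) / \<sigma>)" using q ed by (rule mult_nonneg_nonneg)
          show ?thesis
            by (simp only: ennreal_mult[OF exp_ge_zero qd] ennreal_mult[OF q ed] mult.assoc)
        qed
        then show ?thesis using True by (simp add: eq h_def)
      next
        case False
        then have "c * (y - a) / \<sigma> < 0" using c s by (simp add: divide_neg_pos mult_pos_neg)
        then show ?thesis using False by (simp add: h_def exponential_density_def)
      qed
    qed
  qed
  also have "\<dots> = ennreal (exp (- c * (a - \<mu>) / \<sigma>)) * (ennreal (c / \<sigma>) * (\<integral>\<^sup>+ y. h (c * (y - a) / \<sigma>) \<partial>lborel))"
    by (simp add: nn_integral_cmult)
  also have "(\<integral>\<^sup>+ y. h (c * (y - a) / \<sigma>) \<partial>lborel) = ennreal (\<sigma> / c) * (\<integral>\<^sup>+ z. h z \<partial>lborel)"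
  proof -
    have "(\<integral>\<^sup>+ y. h (c * (y - a) / \<sigma>) \<partial>lborel) = ennreal \<bar>\<sigma> / c\<bar> * (\<integral>\<^sup>+ z. h (c * ((a + \<sigma> / c * z) - a) / \<sigma>) \<partial>lborel)"
      by (rule nn_integral_real_affine) (use c s in auto)
    also have "(\<lambda>z. h (c * ((a + \<sigma> / c * z) - a) / \<sigma>)) = h" using c s by (auto simp: fun_eq_iff)
    finally show ?thesis using c s by simp
  qed
  also have "ennreal (c / \<sigma>) * (ennreal (\<sigma> / c) * (\<integral>\<^sup>+ z. h z \<partial>lborel)) = (\<integral>\<^sup>+ z. h z \<partial>lborel)"
    using c s by (simp add: mult.assoc[symmetric] ennreal_mult[symmetric])
  finally show ?thesis unfolding c_def h_def .
qed


lemma comp_meas: "j \<in> {1..m} \<Longrightarrow> (\<lambda>x. x j :: real) \<in> borel_measurable (PiM {1..m} (\<lambda>_. lborel))"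
  by (metis measurable_component_singleton measurable_lborel1)

lemma pred_ord[measurable]: "Measurable.pred (PiM {1..m} (\<lambda>_. lborel)) (\<lambda>x::nat\<Rightarrow>real. \<forall>j\<in>{1..<m}. x j \<le> x (Suc j))"
proof (intro pred_intros_finite, simp, goal_cases)
  case (1 j)
  then have a: "(\<lambda>x. x j) \<in> borel_measurable (PiM {1..m} (\<lambda>_. lborel))" "(\<lambda>x. x (Suc j)) \<in> borel_measurable (PiM {1..m} (\<lambda>_. lborel))"
    by (auto intro!: comp_meas)
  show ?case unfolding pred_def using borel_measurable_le[OF a] by simp
qed

lemma meas_pc[measurable]: "(\<lambda>x. pc_density m R \<mu> \<sigma> x) \<in> borel_measurable (PiM {1..m} (\<lambda>_. lborel))"
  unfolding pc_density_def f_exp_def F_exp_def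
  by measurable


definition Zf :: "nat \<Rightarrow> (nat \<Rightarrow> nat) \<Rightarrow> real \<Rightarrow> real \<Rightarrow> (nat \<Rightarrow> real) \<Rightarrow> nat \<Rightarrow> real" where
  "Zf m R \<mu> \<sigma> x j = pc_gamma m R j * (x j - (if j = 1 then \<mu> else x (j - 1))) / \<sigma>"

lemma Zf_meas: "j \<in> {1..m} \<Longrightarrow> (\<lambda>x. Zf m R \<mu> \<sigma> x j) \<in> borel_measurable (PiM {1..m} (\<lambda>_. lborel))"
proof (cases "j = 1")
  case True
  assume "j \<in> {1..m}"
  then have [measurable]: "(\<lambda>x. x j :: real) \<in> borel_measurable (PiM {1..m} (\<lambda>_. lborel))" by (rule comp_meas)
  have e: "(\<lambda>x. Zf m R \<mu> \<sigma> x j) = (\<lambda>x. pc_gamma m R j * (x j - \<mu>) / \<sigma>)" using True by (simp add: Zf_def fun_eq_iff)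
  show ?thesis unfolding e by measurable
next
  case False
  assume "j \<in> {1..m}"
  then have [measurable]: "(\<lambda>x. x j :: real) \<in> borel_measurable (PiM {1..m} (\<lambda>_. lborel))"
    "(\<lambda>x. x (j - 1) :: real) \<in> borel_measurable (PiM {1..m} (\<lambda>_. lborel))" using False by (auto intro!: comp_meas simp del: One_nat_def)
  have e: "(\<lambda>x. Zf m R \<mu> \<sigma> x j) = (\<lambda>x. pc_gamma m R j * (x j - x (j - 1)) / \<sigma>)" using False by (simp add: Zf_def fun_eq_iff)
  show ?thesis unfolding e by measurable
qed

lemma f_exp_meas[measurable]: "f_exp \<mu> \<sigma> \<in> borel_measurable borel"
  unfolding f_exp_def[abs_def] by measurable

lemma F_exp_meas[measurable]: "F_exp \<mu> \<sigma> \<in> borel_measurable borel"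
  unfolding F_exp_def[abs_def] by measurable

lemma pc_gamma_step:
  assumes "1 \<le> j" "j \<le> m"
  shows "pc_gamma m (R(m := R m + R (Suc m) + 1)) j = pc_gamma (Suc m) R j"
proof -
  have "pc_gamma m (R(m := R m + R (Suc m) + 1)) j = (\<Sum>i=j..<m. real (R i + 1)) + real (R m + R (Suc m) + 2)"
    unfolding pc_gamma_def using assms
    by (simp add: atLeastLessThanSuc_atLeastAtMost[symmetric] sum.atLeastLessThan_Suc)
  also have "\<dots> = pc_gamma (Suc m) R j"
    unfolding pc_gamma_def using assms
    by (simp add: atLeastLessThanSuc_atLeastAtMost[symmetric] sum.atLeastLessThan_Suc)
  finally show ?thesis .
qed

lemma pc_gamma_last: "pc_gamma (Suc m) R (Suc m) = real (R (Suc m) + 1)"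
  unfolding pc_gamma_def by simp

lemma F_exp_le1: "\<sigma> > 0 \<Longrightarrow> 0 \<le> 1 - F_exp \<mu> \<sigma> y"
  by (simp add: F_exp_def)

lemma f_exp_nonneg: "\<sigma> > 0 \<Longrightarrow> 0 \<le> f_exp \<mu> \<sigma> y"
  by (simp add: f_exp_def)

lemma pc_gamma_nonneg: "0 \<le> pc_gamma m R j"
  unfolding pc_gamma_def by (simp add: sum_nonneg)


lemma key:
  fixes g :: "nat \<Rightarrow> real \<Rightarrow> ennreal"
  assumes s: "\<sigma> > 0" and g[measurable]: "\<And>j. g j \<in> borel_measurable borel"
  shows "(\<integral>\<^sup>+ x. ennreal (pc_density m R \<mu> \<sigma> x) * (\<Prod>j\<in>{1..m}. g j (Zf m R \<mu> \<sigma> x j)) \<partial>PiM {1..m} (\<lambda>_. lborel))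
       = (\<Prod>j\<in>{1..m}. \<integral>\<^sup>+ z. ennreal (exponential_density 1 z) * g j z \<partial>lborel)"
proof (induction m arbitrary: R)
  case 0
  show ?case by (simp add: pc_density_def PiM_empty)
next
  case (Suc m)
  interpret product_sigma_finite "\<lambda>_. lborel::real measure" by standard
  define R' where "R' = R(m := R m + R (Suc m) + 1)"
  define c where "c = real (Suc (R (Suc m)))"
  define E where "E j = (\<integral>\<^sup>+ z. ennreal (exponential_density 1 z) * g j z \<partial>lborel)" for j
  define F where "F x = ennreal (pc_density (Suc m) R \<mu> \<sigma> x) * (\<Prod>j\<in>{1..Suc m}. g j (Zf (Suc m) R \<mu> \<sigma> x j))" for x
  have c: "c > 0" by (simp add: c_def)
  have ins: "{1..Suc m} = insert (Suc m) {1..m}" by auto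
  have m1: "(\<lambda>x. ennreal (pc_density (Suc m) R \<mu> \<sigma> x)) \<in> borel_measurable (PiM {1..Suc m} (\<lambda>_. lborel))"
    by measurable
  have m2: "(\<lambda>x. ennreal (pc_density m R' \<mu> \<sigma> x)) \<in> borel_measurable (PiM {1..m} (\<lambda>_. lborel))"
    by measurable
  have Fm: "F \<in> borel_measurable (PiM (insert (Suc m) {1..m}) (\<lambda>_. lborel))"
    unfolding F_def ins[symmetric]
    by (intro borel_measurable_times_ennreal borel_measurable_prod_ennreal measurable_compose[OF _ g] Zf_meas m1) auto
  have inner: "(\<integral>\<^sup>+ y. F (x(Suc m := y)) \<partial>lborel) =
      ennreal (pc_density m R' \<mu> \<sigma> x) * (\<Prod>j\<in>{1..m}. g j (Zf m R' \<mu> \<sigma> x j)) * E (Suc m)" for x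
  proof -
    define a where "a = (if m = 0 then \<mu> else x m)"
    define A where "A = (if (\<forall>j\<in>{1..<m}. x j \<le> x (Suc j)) then
        (\<Prod>j=1..m. pc_gamma (Suc m) R j * f_exp \<mu> \<sigma> (x j) * (1 - F_exp \<mu> \<sigma> (x j)) ^ R j) else 0)"
    define B where "B y = (if a \<le> y then c * f_exp \<mu> \<sigma> y * (1 - F_exp \<mu> \<sigma> y) ^ R (Suc m) else 0)" for y
    define Pm where "Pm = (\<Prod>j\<in>{1..m}. g j (Zf m R' \<mu> \<sigma> x j))"
    have A0: "A \<ge> 0" unfolding A_def
      by (auto intro!: prod_nonneg mult_nonneg_nonneg pc_gamma_nonneg f_exp_nonneg F_exp_le1 zero_le_power s)
    have pr: "(\<Prod>j=1..Suc m. pc_gamma (Suc m) R j * f_exp \<mu> \<sigma> ((x(Suc m := y)) j) * (1 - F_exp \<mu> \<sigma> ((x(Suc m := y)) j)) ^ R j)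
       = (\<Prod>j=1..m. pc_gamma (Suc m) R j * f_exp \<mu> \<sigma> (x j) * (1 - F_exp \<mu> \<sigma> (x j)) ^ R j) * (c * f_exp \<mu> \<sigma> y * (1 - F_exp \<mu> \<sigma> y) ^ R (Suc m))" for y
    proof -
      have "(\<Prod>j=1..m. pc_gamma (Suc m) R j * f_exp \<mu> \<sigma> ((x(Suc m := y)) j) * (1 - F_exp \<mu> \<sigma> ((x(Suc m := y)) j)) ^ R j)
         = (\<Prod>j=1..m. pc_gamma (Suc m) R j * f_exp \<mu> \<sigma> (x j) * (1 - F_exp \<mu> \<sigma> (x j)) ^ R j)"
        by (rule prod.cong) auto
      then show ?thesis by (simp add: pc_gamma_last c_def)
    qed
    have P1: "pc_density (Suc m) R \<mu> \<sigma> (x(Suc m := y)) = A * B y" for y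
    proof (cases "m = 0")
      case True
      show ?thesis
      proof (cases "\<mu> \<le> y")
        case True
        with \<open>m = 0\<close> show ?thesis using pr[of y] by (simp add: pc_density_def A_def B_def a_def)
      next
        case False
        then have "f_exp \<mu> \<sigma> y = 0" by (simp add: f_exp_def)
        with False \<open>m = 0\<close> show ?thesis using pr[of y] by (simp add: pc_density_def A_def B_def a_def)
      qed
    next
      case False
      have iv: "{1..<Suc m} = insert m {1..<m}" using False by auto
      have ord: "(\<forall>j\<in>{1..<Suc m}. (x(Suc m := y)) j \<le> (x(Suc m := y)) (Suc j)) \<longleftrightarrow>
          (\<forall>j\<in>{1..<m}. x j \<le> x (Suc j)) \<and> x m \<le> y"
        unfolding iv by auto
      show ?thesis using False unfolding pc_density_def ord pr by (simp add: A_def B_def a_def)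
    qed
    have P2: "A * exp (- c * (a - \<mu>) / \<sigma>) = pc_density m R' \<mu> \<sigma> x"
    proof (cases "m = 0")
      case True
      then show ?thesis by (simp add: A_def a_def pc_density_def)
    next
      case False
      then obtain k where k: "m = Suc k" by (cases m) auto
      have ex: "f_exp \<mu> \<sigma> (x m) * exp (- c * (x m - \<mu>) / \<sigma>) = f_exp \<mu> \<sigma> (x m) * (1 - F_exp \<mu> \<sigma> (x m)) ^ Suc (R (Suc m))"
      proof (cases "x m \<le> \<mu>")
        case True then show ?thesis by (simp add: f_exp_def)
      next
        case False
        have e: "real (Suc (R (Suc m))) * (- (x m - \<mu>) / \<sigma>) = - c * (x m - \<mu>) / \<sigma>" by (simp add: c_def algebra_simps)
        have "(1 - F_exp \<mu> \<sigma> (x m)) ^ Suc (R (Suc m)) = exp (- c * (x m - \<mu>) / \<sigma>)"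
          using False exp_of_nat_mult[of "Suc (R (Suc m))" "- (x m - \<mu>) / \<sigma>"] e by (simp add: F_exp_def)
        then show ?thesis by simp
      qed
      have pA: "(\<Prod>j=1..m. pc_gamma (Suc m) R j * f_exp \<mu> \<sigma> (x j) * (1 - F_exp \<mu> \<sigma> (x j)) ^ R j)
         = (\<Prod>j=1..k. pc_gamma (Suc m) R j * f_exp \<mu> \<sigma> (x j) * (1 - F_exp \<mu> \<sigma> (x j)) ^ R j) *
           (pc_gamma (Suc m) R m * f_exp \<mu> \<sigma> (x m) * (1 - F_exp \<mu> \<sigma> (x m)) ^ R m)"
        using k by simp
      have pB: "(\<Prod>j=1..m. pc_gamma m R' j * f_exp \<mu> \<sigma> (x j) * (1 - F_exp \<mu> \<sigma> (x j)) ^ R' j)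
         = (\<Prod>j=1..k. pc_gamma (Suc m) R j * f_exp \<mu> \<sigma> (x j) * (1 - F_exp \<mu> \<sigma> (x j)) ^ R j) *
           (pc_gamma (Suc m) R m * f_exp \<mu> \<sigma> (x m) * (1 - F_exp \<mu> \<sigma> (x m)) ^ (R m + Suc (R (Suc m))))"
      proof -
        have "(\<Prod>j=1..k. pc_gamma m R' j * f_exp \<mu> \<sigma> (x j) * (1 - F_exp \<mu> \<sigma> (x j)) ^ R' j)
          = (\<Prod>j=1..k. pc_gamma (Suc m) R j * f_exp \<mu> \<sigma> (x j) * (1 - F_exp \<mu> \<sigma> (x j)) ^ R j)"
        proof (rule prod.cong)
          fix j assume "j \<in> {1..k}"
          then have "pc_gamma m R' j = pc_gamma (Suc m) R j" unfolding R'_def by (intro pc_gamma_step) (use k in auto)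
          moreover have "R' j = R j" using k \<open>j \<in> {1..k}\<close> unfolding R'_def by auto
          ultimately show "pc_gamma m R' j * f_exp \<mu> \<sigma> (x j) * (1 - F_exp \<mu> \<sigma> (x j)) ^ R' j =
            pc_gamma (Suc m) R j * f_exp \<mu> \<sigma> (x j) * (1 - F_exp \<mu> \<sigma> (x j)) ^ R j" by simp
        qed simp
        moreover have "pc_gamma m R' m = pc_gamma (Suc m) R m" unfolding R'_def by (intro pc_gamma_step) (use k in auto)
        moreover have "R' m = R m + Suc (R (Suc m))" by (simp add: R'_def)
        ultimately show ?thesis using k by simp
      qed
      define G where "G = pc_gamma (Suc m) R m"
      define Fm where "Fm = 1 - F_exp \<mu> \<sigma> (x m)"
      define fm where "fm = f_exp \<mu> \<sigma> (x m)"
      have Y: "(G * fm * Fm ^ R m) * exp (- c * (x m - \<mu>) / \<sigma>) = G * fm * Fm ^ (R m + Suc (R (Suc m)))"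
      proof -
        have "(G * fm * Fm ^ R m) * exp (- c * (x m - \<mu>) / \<sigma>) = G * Fm ^ R m * (fm * exp (- c * (x m - \<mu>) / \<sigma>))"
          by (simp only: mult_ac)
        also have "\<dots> = G * Fm ^ R m * (fm * Fm ^ Suc (R (Suc m)))" using ex unfolding fm_def Fm_def by simp
        finally show ?thesis by (simp add: power_add mult_ac)
      qed
      show ?thesis
        unfolding pc_density_def A_def pB pA using False Y unfolding G_def Fm_def fm_def a_def
        by (simp add: mult.assoc)
    qed
    have Z1: "Zf (Suc m) R \<mu> \<sigma> (x(Suc m := y)) j = Zf m R' \<mu> \<sigma> x j" if "j \<in> {1..m}" for j y
    proof -
      have "pc_gamma m R' j = pc_gamma (Suc m) R j" using that unfolding R'_def by (intro pc_gamma_step) auto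
      moreover have "j \<noteq> Suc m" "j - 1 \<noteq> Suc m" using that by auto
      ultimately show ?thesis by (simp add: Zf_def)
    qed
    have Z2: "Zf (Suc m) R \<mu> \<sigma> (x(Suc m := y)) (Suc m) = c * (y - a) / \<sigma>" for y
      by (simp add: Zf_def pc_gamma_last c_def a_def)
    have "(\<integral>\<^sup>+ y. F (x(Suc m := y)) \<partial>lborel) = (\<integral>\<^sup>+ y. (ennreal A * Pm) * (ennreal (B y) * g (Suc m) (c * (y - a) / \<sigma>)) \<partial>lborel)"
    proof (rule nn_integral_cong)
      fix y
      have "(\<Prod>j\<in>{1..Suc m}. g j (Zf (Suc m) R \<mu> \<sigma> (x(Suc m := y)) j)) = Pm * g (Suc m) (c * (y - a) / \<sigma>)"
      proof -
        have "(\<Prod>j\<in>{1..m}. g j (Zf (Suc m) R \<mu> \<sigma> (x(Suc m := y)) j)) = Pm"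
          unfolding Pm_def by (rule prod.cong) (auto simp: Z1)
        then show ?thesis unfolding ins by (simp add: Z2 mult.commute)
      qed
      moreover have "B y \<ge> 0" unfolding B_def using c
        by (auto intro!: mult_nonneg_nonneg f_exp_nonneg F_exp_le1 zero_le_power s)
      ultimately show "F (x(Suc m := y)) = (ennreal A * Pm) * (ennreal (B y) * g (Suc m) (c * (y - a) / \<sigma>))"
        unfolding F_def P1 using A0 by (simp add: ennreal_mult mult_ac)
    qed
    also have "\<dots> = (ennreal A * Pm) * (\<integral>\<^sup>+ y. ennreal (B y) * g (Suc m) (c * (y - a) / \<sigma>) \<partial>lborel)"
      unfolding B_def by (rule nn_integral_cmult) measurable
    also have "\<dots> = ennreal (pc_density m R' \<mu> \<sigma> x) * Pm * E (Suc m)"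
    proof (cases "A = 0")
      case True
      then show ?thesis using P2[symmetric] by simp
    next
      case False
      have "a \<ge> \<mu>"
      proof (cases "m = 0")
        case False
        have "x m > \<mu>"
        proof (rule ccontr)
          assume "\<not> x m > \<mu>"
          then have "f_exp \<mu> \<sigma> (x m) = 0" by (simp add: f_exp_def)
          then have "A = 0" unfolding A_def using False
            by (auto intro!: prod_zero bexI[of _ m])
          with \<open>A \<noteq> 0\<close> show False by simp
        qed
        then show ?thesis using False by (simp add: a_def)
      qed (simp add: a_def)
      have "(\<integral>\<^sup>+ y. ennreal (B y) * g (Suc m) (c * (y - a) / \<sigma>) \<partial>lborel) = ennreal (exp (- c * (a - \<mu>) / \<sigma>)) * E (Suc m)"
        unfolding B_def c_def E_def using L1[OF g s \<open>a \<ge> \<mu>\<close>, of "R (Suc m)"] by simp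
      then show ?thesis using A0 P2[symmetric] by (simp add: ennreal_mult mult_ac)
    qed
    finally show ?thesis unfolding Pm_def .
  qed
  have "(\<integral>\<^sup>+ x. F x \<partial>PiM {1..Suc m} (\<lambda>_. lborel)) = (\<integral>\<^sup>+ x. (\<integral>\<^sup>+ y. F (x(Suc m := y)) \<partial>lborel) \<partial>PiM {1..m} (\<lambda>_. lborel))"
    unfolding ins by (rule product_nn_integral_insert) (use Fm in auto)
  also have "\<dots> = (\<integral>\<^sup>+ x. ennreal (pc_density m R' \<mu> \<sigma> x) * (\<Prod>j\<in>{1..m}. g j (Zf m R' \<mu> \<sigma> x j)) \<partial>PiM {1..m} (\<lambda>_. lborel)) * E (Suc m)"
    unfolding inner by (rule nn_integral_multc) (intro borel_measurable_times_ennreal borel_measurable_prod_ennreal measurable_compose[OF _ g] Zf_meas m2; auto)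
  also have "\<dots> = (\<Prod>j\<in>{1..Suc m}. E j)"
    using Suc.IH[of R'] by (simp add: E_def)
  finally show ?case unfolding F_def E_def .
qed


abbreviation "ExpM \<equiv> density lborel (exponential_density (1::real))"

lemma prob_ExpM: "prob_space ExpM" by (rule prob_space_exponential_density) simp

lemma prod_ind: "finite I \<Longrightarrow> (\<Prod>j\<in>I. indicator (A j) (z j) :: ennreal) = (if \<forall>j\<in>I. z j \<in> A j then 1 else 0)"
  by (induction rule: finite_induct) auto

lemma Zvec_meas: "(\<lambda>x. \<lambda>j\<in>{1..m}. Zf m R \<mu> \<sigma> x j) \<in> measurable (PiM {1..m} (\<lambda>_. lborel)) (PiM {1..m} (\<lambda>_. ExpM))"
proof -
  have e: "sets (PiM {1..m} (\<lambda>_. ExpM)) = sets (PiM {1..m} (\<lambda>_. borel :: real measure))"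
    by (intro sets_PiM_cong) auto
  show ?thesis unfolding measurable_cong_sets[OF refl e]
    by (intro measurable_restrict Zf_meas) auto
qed

lemma Zlaw:
  assumes s: "\<sigma> > 0"
  shows "distr (pc_sample m R \<mu> \<sigma>) (PiM {1..m} (\<lambda>_. ExpM)) (\<lambda>x. \<lambda>j\<in>{1..m}. Zf m R \<mu> \<sigma> x j) = PiM {1..m} (\<lambda>_. ExpM)"
proof -
  interpret product_sigma_finite "\<lambda>_. ExpM"
    by (metis prob_ExpM prob_space_imp_sigma_finite product_sigma_finite.intro)
  show ?thesis
  proof (rule PiM_eqI)
    show "sets (distr (pc_sample m R \<mu> \<sigma>) (PiM {1..m} (\<lambda>_. ExpM)) (\<lambda>x. \<lambda>j\<in>{1..m}. Zf m R \<mu> \<sigma> x j)) = sets (PiM {1..m} (\<lambda>_. ExpM))"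
      by simp
    fix A assume A: "\<And>i. i \<in> {1..m} \<Longrightarrow> A i \<in> sets ExpM"
    define g where "g j = (indicator (if j \<in> {1..m} then A j else {}) :: real \<Rightarrow> ennreal)" for j
    have gm: "g j \<in> borel_measurable borel" for j
      unfolding g_def using A by (cases "j \<in> {1..m}") auto
    have Zm: "(\<lambda>x. \<lambda>j\<in>{1..m}. Zf m R \<mu> \<sigma> x j) \<in> measurable (pc_sample m R \<mu> \<sigma>) (PiM {1..m} (\<lambda>_. ExpM))"
      unfolding pc_sample_def using Zvec_meas by simp
    have PA: "Pi\<^sub>E {1..m} A \<in> sets (PiM {1..m} (\<lambda>_. ExpM))"
      using A by (intro sets_PiM_I_finite) auto
    have "emeasure (distr (pc_sample m R \<mu> \<sigma>) (PiM {1..m} (\<lambda>_. ExpM)) (\<lambda>x. \<lambda>j\<in>{1..m}. Zf m R \<mu> \<sigma> x j)) (Pi\<^sub>E {1..m} A)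
       = emeasure (pc_sample m R \<mu> \<sigma>) ((\<lambda>x. \<lambda>j\<in>{1..m}. Zf m R \<mu> \<sigma> x j) -` Pi\<^sub>E {1..m} A \<inter> space (pc_sample m R \<mu> \<sigma>))"
      by (rule emeasure_distr[OF Zm PA])
    also have "\<dots> = (\<integral>\<^sup>+ x. ennreal (pc_density m R \<mu> \<sigma> x) * indicator ((\<lambda>x. \<lambda>j\<in>{1..m}. Zf m R \<mu> \<sigma> x j) -` Pi\<^sub>E {1..m} A \<inter> space (PiM {1..m} (\<lambda>_. lborel))) x \<partial>PiM {1..m} (\<lambda>_. lborel))"
    proof -
      have S: "(\<lambda>x. \<lambda>j\<in>{1..m}. Zf m R \<mu> \<sigma> x j) -` Pi\<^sub>E {1..m} A \<inter> space (PiM {1..m} (\<lambda>_. lborel)) \<in> sets (PiM {1..m} (\<lambda>_. lborel))"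
        by (rule measurable_sets[OF Zvec_meas PA])
      show ?thesis unfolding pc_sample_def space_density by (rule emeasure_density[OF _ S]) measurable
    qed
    also have "\<dots> = (\<integral>\<^sup>+ x. ennreal (pc_density m R \<mu> \<sigma> x) * (\<Prod>j\<in>{1..m}. g j (Zf m R \<mu> \<sigma> x j)) \<partial>PiM {1..m} (\<lambda>_. lborel))"
    proof (rule nn_integral_cong)
      fix x assume "x \<in> space (PiM {1..m} (\<lambda>_. lborel :: real measure))"
      then have "indicator ((\<lambda>x. \<lambda>j\<in>{1..m}. Zf m R \<mu> \<sigma> x j) -` Pi\<^sub>E {1..m} A \<inter> space (PiM {1..m} (\<lambda>_. lborel))) x
          = (\<Prod>j\<in>{1..m}. g j (Zf m R \<mu> \<sigma> x j) :: ennreal)"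
      proof -
        have "(\<Prod>j\<in>{1..m}. g j (Zf m R \<mu> \<sigma> x j)) = (\<Prod>j\<in>{1..m}. indicator (A j) (Zf m R \<mu> \<sigma> x j))"
          unfolding g_def by (rule prod.cong) auto
        also have "\<dots> = (if \<forall>j\<in>{1..m}. Zf m R \<mu> \<sigma> x j \<in> A j then 1 else 0)" by (rule prod_ind) simp
        finally show ?thesis using \<open>x \<in> space _\<close> by (simp add: indicator_def PiE_iff)
      qed
      then show "ennreal (pc_density m R \<mu> \<sigma> x) * indicator ((\<lambda>x. \<lambda>j\<in>{1..m}. Zf m R \<mu> \<sigma> x j) -` Pi\<^sub>E {1..m} A \<inter> space (PiM {1..m} (\<lambda>_. lborel))) x
          = ennreal (pc_density m R \<mu> \<sigma> x) * (\<Prod>j\<in>{1..m}. g j (Zf m R \<mu> \<sigma> x j))" by simp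
    qed
    also have "\<dots> = (\<Prod>j\<in>{1..m}. \<integral>\<^sup>+ z. ennreal (exponential_density 1 z) * g j z \<partial>lborel)"
      by (rule key[OF s gm])
    also have "\<dots> = (\<Prod>j\<in>{1..m}. emeasure ExpM (A j))"
    proof (rule prod.cong)
      fix j assume j: "j \<in> {1..m}"
      then show "(\<integral>\<^sup>+ z. ennreal (exponential_density 1 z) * g j z \<partial>lborel) = emeasure ExpM (A j)"
        using A[OF j] by (simp add: g_def emeasure_density)
    qed simp
    finally show "emeasure (distr (pc_sample m R \<mu> \<sigma>) (PiM {1..m} (\<lambda>_. ExpM)) (\<lambda>x. \<lambda>j\<in>{1..m}. Zf m R \<mu> \<sigma> x j)) (Pi\<^sub>E {1..m} A)
       = (\<Prod>j\<in>{1..m}. emeasure ExpM (A j))" .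
  qed simp
qed

lemma prob_pc:
  assumes s: "\<sigma> > 0"
  shows "prob_space (pc_sample m R \<mu> \<sigma>)"
proof
  interpret P: prob_space "PiM {1..m} (\<lambda>_. ExpM)" by (rule prob_space_PiM) (simp add: prob_ExpM)
  have Zm: "(\<lambda>x. \<lambda>j\<in>{1..m}. Zf m R \<mu> \<sigma> x j) \<in> measurable (pc_sample m R \<mu> \<sigma>) (PiM {1..m} (\<lambda>_. ExpM))"
    unfolding pc_sample_def using Zvec_meas by simp
  have "emeasure (pc_sample m R \<mu> \<sigma>) (space (pc_sample m R \<mu> \<sigma>)) = 
        emeasure (distr (pc_sample m R \<mu> \<sigma>) (PiM {1..m} (\<lambda>_. ExpM)) (\<lambda>x. \<lambda>j\<in>{1..m}. Zf m R \<mu> \<sigma> x j)) (space (PiM {1..m} (\<lambda>_. ExpM)))"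
  proof -
    have "(\<lambda>x. \<lambda>j\<in>{1..m}. Zf m R \<mu> \<sigma> x j) -` space (PiM {1..m} (\<lambda>_. ExpM)) \<inter> space (pc_sample m R \<mu> \<sigma>) = space (pc_sample m R \<mu> \<sigma>)"
      using measurable_space[OF Zm] by blast
    then show ?thesis by (subst emeasure_distr[OF Zm]) auto
  qed
  also have "\<dots> = 1" unfolding Zlaw[OF s] by (rule P.emeasure_space_1)
  finally show "emeasure (pc_sample m R \<mu> \<sigma>) (space (pc_sample m R \<mu> \<sigma>)) = 1" .
qed


lemma pc_gamma_1:
  assumes "1 \<le> m" "(\<Sum>j=1..m. R j) = n - m" "m \<le> n"
  shows "pc_gamma m R 1 = real n"
proof -
  have "(\<Sum>i=1..m. R i + 1) = n" using assms by (subst sum.distrib) simp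
  then have "real (\<Sum>i=1..m. R i + 1) = real n" by simp
  then show ?thesis unfolding pc_gamma_def of_nat_sum by simp
qed

lemma ST_law_eq:
  assumes m: "1 < m" and mn: "m \<le> n" and sR: "(\<Sum>j=1..m. R j) = n - m" and s: "\<sigma> > 0"
  shows "distr (pc_sample m R \<mu> \<sigma>) (borel \<Otimes>\<^sub>M borel) (\<lambda>x. ((x 1 - \<mu>) / \<sigma>, sigma_hat m R x / \<sigma>)) = ST_law m n"
proof -
  define P where "P = pc_sample m R \<mu> \<sigma>"
  interpret Q: prob_space P unfolding P_def by (rule prob_pc[OF s])
  define I where "I = {1..m}"
  interpret PP: product_prob_space "\<lambda>_. ExpM" I
    by (simp add: product_prob_space_def product_prob_space_axioms_def product_sigma_finite_def prob_ExpM prob_space_imp_sigma_finite)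
  define X where "X j x = Zf m R \<mu> \<sigma> x j" for j x
  have Zm: "(\<lambda>x. \<lambda>j\<in>I. X j x) \<in> measurable P (PiM I (\<lambda>_. ExpM))"
    unfolding pc_sample_def P_def I_def X_def using Zvec_meas by simp
  have ZL: "distr P (PiM I (\<lambda>_. ExpM)) (\<lambda>x. \<lambda>j\<in>I. X j x) = PiM I (\<lambda>_. ExpM)"
    unfolding P_def I_def X_def by (rule Zlaw[OF s])
  have Xm: "X j \<in> measurable P borel" if "j \<in> I" for j
  proof -
    have "(\<lambda>\<omega>. \<omega> j) \<circ> (\<lambda>x. \<lambda>j\<in>I. X j x) \<in> measurable P ExpM"
      using that by (intro measurable_comp[OF Zm] measurable_component_singleton)
    moreover have "\<And>x. ((\<lambda>\<omega>. \<omega> j) \<circ> (\<lambda>x. \<lambda>j\<in>I. X j x)) x = X j x" using that by simp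
    ultimately show ?thesis by (simp add: comp_def cong: measurable_cong_sets)
  qed
  have XD: "distr P ExpM (X j) = ExpM" if "j \<in> I" for j
  proof -
    have "distr P ExpM (X j) = distr P ExpM ((\<lambda>\<omega>. \<omega> j) \<circ> (\<lambda>x. \<lambda>j\<in>I. X j x))"
      using that by (intro distr_cong) auto
    also have "\<dots> = distr (distr P (PiM I (\<lambda>_. ExpM)) (\<lambda>x. \<lambda>j\<in>I. X j x)) ExpM (\<lambda>\<omega>. \<omega> j)"
      using that by (intro distr_distr[symmetric] Zm measurable_component_singleton)
    also have "\<dots> = ExpM" unfolding ZL using PP.PiM_component[of j] that by simp
    finally show ?thesis .
  qed
  have dist: "distributed P lborel (X j) (exponential_density 1)" if "j \<in> I" for j
    unfolding distributed_def
  proof safe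
    show "distr P lborel (X j) = ExpM" using XD[OF that] by (metis distr_cong sets_lborel sets_density)
    show "X j \<in> measurable P lborel" using Xm[OF that] by simp
  qed simp
  have ind: "Q.indep_vars (\<lambda>_. borel) X I"
  proof (subst Q.indep_vars_iff_distr_eq_PiM')
    show "I \<noteq> {}" using m by (simp add: I_def)
    show "\<And>i. i \<in> I \<Longrightarrow> X i \<in> measurable P borel" by (rule Xm)
    have "distr P (Pi\<^sub>M I (\<lambda>i. borel)) (\<lambda>x. restrict (\<lambda>i. X i x) I) = distr P (PiM I (\<lambda>_. ExpM)) (\<lambda>x. \<lambda>j\<in>I. X j x)"
      by (intro distr_cong sets_PiM_cong) auto
    also have "\<dots> = PiM I (\<lambda>_. ExpM)" by (rule ZL)
    also have "\<dots> = (\<Pi>\<^sub>M i\<in>I. distr P borel (X i))"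
    proof (intro PiM_cong refl)
      fix i assume "i \<in> I"
      show "ExpM = distr P borel (X i)" using XD[OF \<open>i \<in> I\<close>] by (metis distr_cong sets_lborel sets_density)
    qed
    finally show "distr P (Pi\<^sub>M I (\<lambda>i. borel)) (\<lambda>x. restrict (\<lambda>i. X i x) I) = (\<Pi>\<^sub>M i\<in>I. distr P borel (X i))" .
  qed
  have I2: "I = insert 1 {2..m}" "1 \<notin> {2..m}" using m by (auto simp: I_def)
  define S where "S x = (1 / real n) * X 1 x" for x
  define T where "T x = (1 / real m) * (\<Sum>j\<in>{2..m}. X j x)" for x
  have n0: "real n > 0" using m mn by simp
  have S_eq: "S x = (x 1 - \<mu>) / \<sigma>" for x
    using pc_gamma_1[OF _ sR mn] m n0 by (simp add: S_def X_def Zf_def)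
  have T_eq: "T x = sigma_hat m R x / \<sigma>" for x
  proof -
    have "(\<Sum>j\<in>{2..m}. X j x) = (\<Sum>j=2..m. pc_gamma m R j * (x j - x (j - 1))) / \<sigma>"
      unfolding sum_divide_distrib X_def Zf_def by (rule sum.cong) auto
    then show ?thesis by (simp add: T_def sigma_hat_def)
  qed
  have dS: "distributed P lborel S (exponential_density (real n))"
  proof -
    have "distributed P lborel (\<lambda>x. (1 / real n) * X 1 x) (erlang_density 0 (1 / (1 / real n)))"
      by (rule Q.erlang_distributed_mult_const) (use dist[of 1] m n0 in \<open>auto simp: I_def\<close>)
    then show ?thesis by (simp add: S_def[abs_def])
  qed
  have dT: "distributed P lborel T (erlang_density (m - 2) (real m))"
  proof -
    have "distributed P lborel (\<lambda>x. \<Sum>j\<in>{2..m}. X j x) (erlang_density (card {2..m} - 1) 1)"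
      by (rule Q.exponential_distributed_sum) (use m dist ind in \<open>auto simp: I_def intro: Q.indep_vars_subset\<close>)
    then have "distributed P lborel (\<lambda>x. (1 / real m) * (\<Sum>j\<in>{2..m}. X j x)) (erlang_density (card {2..m} - 1) (1 / (1 / real m)))"
      by (rule Q.erlang_distributed_mult_const) (use m in auto)
    moreover have "card {2..m} - 1 = m - 2" by simp
    ultimately show ?thesis by (simp add: T_def[abs_def])
  qed
  have iST: "Q.indep_var borel S borel T"
  proof -
    have "Q.indep_var borel (X 1) borel (\<lambda>\<omega>. \<Sum>i\<in>{2..m}. X i \<omega>)"
      by (rule Q.indep_vars_sum) (use ind I2 in auto)
    from Q.indep_var_compose[OF this, of "\<lambda>z. (1 / real n) * z" borel "\<lambda>z. (1 / real m) * z" borel]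
    show ?thesis by (simp add: S_def[abs_def] T_def[abs_def] comp_def)
  qed
  have "distr P (borel \<Otimes>\<^sub>M borel) (\<lambda>x. (S x, T x)) = distr P borel S \<Otimes>\<^sub>M distr P borel T"
    using iST unfolding Q.indep_var_distribution_eq by simp
  also have "distr P borel S = density lborel (exponential_density (real n))"
    using dS unfolding distributed_def by (metis distr_cong sets_lborel)
  also have "distr P borel T = density lborel (erlang_density (m - 2) (real m))"
    using dT unfolding distributed_def by (metis distr_cong sets_lborel)
  finally have "distr P (borel \<Otimes>\<^sub>M borel) (\<lambda>x. (S x, T x)) = ST_law m n" unfolding ST_law_def .
  then show ?thesis unfolding P_def S_eq T_eq .
qed


lemma expconv: "0 \<le> (a::real) \<Longrightarrow> a \<le> 1 \<Longrightarrow> exp (a * x + (1 - a) * y) \<le> a * exp x + (1 - a) * exp y"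
  using convex_onD[OF exp_convex, of "1 - a" x y] by (simp add: algebra_simps)

definition hfun :: "real \<Rightarrow> real \<Rightarrow> real \<Rightarrow> real" where
  "hfun s t u = \<bar>F_exp s t u - F_exp 0 1 u\<bar>"

definition Kfun :: "real \<Rightarrow> real \<Rightarrow> real" where
  "Kfun s t = (SUP u. hfun s t u)"

lemma hfun_bound:
  assumes s: "s > 0" and t: "t > 0" "t \<noteq> 1"
  shows "hfun s t u \<le> max (U_fun s) (V_fun s t)"
proof (cases "u \<le> s")
  case True
  have "hfun s t u \<le> U_fun s"
  proof (cases "u \<le> 0")
    case True then show ?thesis using s by (simp add: hfun_def F_exp_def U_fun_def)
  next
    case False
    then show ?thesis using \<open>u \<le> s\<close> s by (simp add: hfun_def F_exp_def U_fun_def)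
  qed
  then show ?thesis by simp
next
  case False
  define y where "y = - (u - s) / t"
  have y0: "y < 0" using False t by (simp add: y_def divide_neg_pos)
  have eu: "exp (- u) = exp (t * y - s)" using t by (simp add: y_def)
  have hd: "hfun s t u = \<bar>exp (t * y - s) - exp y\<bar>"
    using False s t by (simp add: hfun_def F_exp_def eu[symmetric] y_def)
  define B where "B = (s - t * ln t) / (t - 1)"
  have lnt: "exp (- ln t) = 1 / t" using t by (simp add: exp_minus inverse_eq_divide)
  show ?thesis
  proof (cases "t < 1")
    case True
    have V: "V_fun s t = (1 - t) * exp B"
    proof -
      have "ln t < 0" using True t by simp
      then have "\<not> s < ln t" using s by simp
      then show ?thesis using True by (simp add: V_fun_def B_def)
    qed
    have i: "exp (t * y - s) - exp y \<le> V_fun s t"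
    proof -
      have "t * (y - ln t) + (1 - t) * B = t * y - s"
        using True t by (simp add: B_def field_simps)
      then have "exp (t * y - s) \<le> t * exp (y - ln t) + (1 - t) * exp B"
        using expconv[of t "y - ln t" B] True t by simp
      also have "t * exp (y - ln t) = exp y" using t by (simp add: exp_diff)
      finally show ?thesis using V by simp
    qed
    have ii: "exp y - exp (t * y - s) \<le> U_fun s"
    proof -
      have "t * y \<ge> y" using True y0 by (simp add: mult_le_cancel_right1 less_imp_le)
      then have "exp y \<le> exp (t * y)" by simp
      moreover have "exp (t * y) \<le> 1" using t y0 by (simp add: mult_pos_neg less_imp_le)
      moreover have "exp (t * y - s) = exp (t * y) * exp (- s)" by (simp add: exp_diff exp_minus field_simps)
      moreover have "exp (- s) \<le> 1" using s by simp
      ultimately have "exp y - exp (t * y - s) \<le> exp (t * y) * (1 - exp (- s))" by (simp add: algebra_simps)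
      also have "\<dots> \<le> 1 * (1 - exp (- s))"
        using \<open>exp (t * y) \<le> 1\<close> \<open>exp (- s) \<le> 1\<close> by (intro mult_right_mono) auto
      finally show ?thesis by (simp add: U_fun_def)
    qed
    show ?thesis unfolding hd using i ii by (auto simp: abs_le_iff le_max_iff_disj)
  next
    case False
    then have t1: "t > 1" using t by simp
    have i: "exp (t * y - s) - exp y \<le> U_fun s"
    proof -
      have "t * y - y < 0" using mult_pos_neg[of "t - 1" y] t1 y0 by (simp add: algebra_simps)
      then have "t * y - s \<le> y" using s by linarith
      then have "exp (t * y - s) \<le> exp y" by simp
      moreover have "0 \<le> U_fun s" using s by (simp add: U_fun_def)
      ultimately show ?thesis by linarith
    qed
    have ii: "exp y - exp (t * y - s) \<le> max (U_fun s) (V_fun s t)"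
    proof (cases "s < ln t")
      case True
      define B' where "B' = (s - ln t) / (t - 1)"
      have V: "V_fun s t = (t - 1) * exp B" using True t1 by (simp add: V_fun_def B_def)
      have "(1 / t) * (t * y - s + ln t) + (1 - 1 / t) * B' = y"
        using t1 by (simp add: B'_def field_simps)
      then have "exp y \<le> (1 / t) * exp (t * y - s + ln t) + (1 - 1 / t) * exp B'"
        using expconv[of "1 / t" "t * y - s + ln t" B'] t1 by simp
      also have "(1 / t) * exp (t * y - s + ln t) = exp (t * y - s)" using t by (simp add: exp_add)
      also have "(1 - 1 / t) * exp B' = (t - 1) * exp B"
      proof -
        have "B' = B + ln t" using t1 by (simp add: B_def B'_def field_simps)
        then show ?thesis using t by (simp add: exp_add field_simps)
      qed
      finally show ?thesis using V by simp
    next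
      case False
      define w where "w = u - s"
      have w: "w > 0" using \<open>\<not> u \<le> s\<close> by (simp add: w_def)
      have yw: "y = (1 / t) * (- w) + (1 - 1 / t) * 0" by (simp add: y_def w_def)
      have "exp y \<le> (1 / t) * exp (- w) + (1 - 1 / t) * exp 0"
        unfolding yw using t1 by (intro expconv) auto
      moreover have "exp (t * y - s) = exp (- w) * exp (- s)" using t by (simp add: y_def w_def exp_add[symmetric])
      moreover have "exp (- s) \<le> 1 / t"
      proof -
        have "- s \<le> - ln t" using False by simp
        then have "exp (- s) \<le> exp (- ln t)" by simp
        then show ?thesis using lnt by simp
      qed
      moreover have "exp (- w) \<le> 1" using w by simp
      ultimately have "exp y - exp (t * y - s) \<le> 1 - exp (- s)"
      proof -
        assume a: "exp y \<le> (1 / t) * exp (- w) + (1 - 1 / t) * exp 0" "exp (t * y - s) = exp (- w) * exp (- s)"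
          "exp (- s) \<le> 1 / t" "exp (- w) \<le> 1"
        have "(1 - exp (- w)) * (1 / t - exp (- s)) \<ge> 0" using a(3,4) by simp
        then show ?thesis using a(1,2) by (simp add: algebra_simps)
      qed
      then show ?thesis by (simp add: U_fun_def)
    qed
    show ?thesis unfolding hd using i ii by (auto simp: abs_le_iff le_max_iff_disj)
  qed
qed

lemma hfun_U: "s > 0 \<Longrightarrow> hfun s t s = U_fun s"
  by (simp add: hfun_def F_exp_def U_fun_def)

lemma hfun_V:
  assumes s: "s > 0" and t: "t > 0" "t \<noteq> 1" and V: "V_fun s t \<noteq> 0"
  shows "\<exists>u. hfun s t u = V_fun s t"
proof -
  define u where "u = (s - t * ln t) / (1 - t)"
  have ind: "(t < 1 \<and> \<not> s < ln t) \<or> (\<not> t < 1 \<and> s < ln t)"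
  proof -
    have "t < 1 \<or> s < ln t" using V by (auto simp: V_fun_def)
    moreover have "t < 1 \<Longrightarrow> ln t < 0" using t by simp
    ultimately show ?thesis using s by auto
  qed
  have Vf: "V_fun s t = \<bar>1 - t\<bar> * exp ((s - t * ln t) / (t - 1))"
    using ind by (auto simp: V_fun_def)
  have us: "u - s = t * (s - ln t) / (1 - t)" using t by (simp add: u_def field_simps)
  have pos: "t * (s - ln t) / (1 - t) > 0"
  proof (cases "t < 1")
    case True
    then have "ln t < 0" using t by simp
    then have "s - ln t > 0" using s by simp
    then show ?thesis using True t by (intro divide_pos_pos mult_pos_pos) auto
  next
    case False
    then have "s - ln t < 0" using ind by simp
    then show ?thesis using False t by (intro divide_neg_neg mult_pos_neg) auto
  qed
  have gt: "u > s" using us pos by simp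
  have e1: "- (u - s) / t = - u + ln t" using t by (simp add: u_def field_simps)
  have e2: "- u = (s - t * ln t) / (t - 1)" using t by (simp add: u_def field_simps)
  have "hfun s t u = \<bar>exp (- u) - exp (- (u - s) / t)\<bar>"
    using gt s by (simp add: hfun_def F_exp_def)
  also have "exp (- (u - s) / t) = t * exp (- u)" unfolding e1 using t by (simp add: exp_diff exp_minus field_simps)
  also have "\<bar>exp (- u) - t * exp (- u)\<bar> = \<bar>1 - t\<bar> * exp (- u)" 
  proof -
    have "exp (- u) - t * exp (- u) = (1 - t) * exp (- u)" by (simp add: algebra_simps)
    then show ?thesis by (simp add: abs_mult)
  qed
  finally show ?thesis using Vf e2 by auto
qed

lemma Kfun_eq:
  assumes s: "s > 0" and t: "t > 0" "t \<noteq> 1"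
  shows "Kfun s t = max (U_fun s) (V_fun s t)"
proof (rule antisym)
  have bdd: "bdd_above (range (hfun s t))" using hfun_bound[OF s t] by (intro bdd_aboveI) auto
  show "Kfun s t \<le> max (U_fun s) (V_fun s t)"
    unfolding Kfun_def by (rule cSUP_least) (auto intro: hfun_bound[OF s t])
  have U: "U_fun s \<le> Kfun s t" unfolding Kfun_def using hfun_U[OF s, of t] cSUP_upper[OF _ bdd, of s] by simp
  have "V_fun s t \<le> Kfun s t"
  proof (cases "V_fun s t = 0")
    case True
    have "0 \<le> U_fun s" using s by (simp add: U_fun_def)
    then show ?thesis using U True by linarith
  next
    case False
    then obtain u where "hfun s t u = V_fun s t" using hfun_V[OF s t] by blast
    then show ?thesis unfolding Kfun_def using cSUP_upper[OF _ bdd, of u] by simp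
  qed
  then show "max (U_fun s) (V_fun s t) \<le> Kfun s t" using U by simp
qed


lemma F_exp_max: "F_exp a b u = 1 - exp (- (max u a - a) / b)"
  by (simp add: F_exp_def max_def)

lemma F_exp_max2: "F_exp a b u = 1 - exp ((max u a - a) * (- 1 / b))"
  by (simp add: F_exp_def max_def) (metis minus_diff_eq minus_divide_left)

lemma F_exp_cont: "continuous (at u) (F_exp a b)"
  unfolding F_exp_max2[abs_def] by (intro continuous_intros)

lemma F_exp_01: assumes "t \<ge> 0" shows "0 \<le> F_exp s t u \<and> F_exp s t u \<le> 1"
proof (cases "u \<le> s")
  case False
  then have "(s - u) / t \<le> 0" using assms by (intro divide_nonpos_nonneg) auto
  then have "exp (- (u - s) / t) \<le> 1" by simp
  moreover have "exp (- (u - s) / t) > 0" by simp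
  ultimately show ?thesis using False unfolding F_exp_def by simp
qed (simp add: F_exp_def)

lemma hfun_cont: "continuous (at u) (hfun s t)"
  unfolding hfun_def[abs_def] by (intro continuous_intros F_exp_cont)

lemma SUP_rat:
  fixes f :: "real \<Rightarrow> real"
  assumes c: "\<And>u. continuous (at u) f" and b: "bdd_above (range f)"
  shows "(SUP q\<in>\<rat>. f q) = (SUP u. f u)"
proof (rule antisym)
  show "(SUP q\<in>\<rat>. f q) \<le> (SUP u. f u)"
    by (rule cSUP_subset_mono) (use b Rats_infinite in \<open>auto intro: infinite_imp_nonempty\<close>)
  have bq: "bdd_above (f ` \<rat>)" using b by (rule bdd_above_mono) auto
  show "(SUP u. f u) \<le> (SUP q\<in>\<rat>. f q)"
  proof (rule cSUP_least)
    fix u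
    show "f u \<le> (SUP q\<in>\<rat>. f q)"
    proof (rule field_le_epsilon)
      fix e :: real assume e: "e > 0"
      obtain d where d: "d > 0" "\<And>x'. norm (x' - u) < d \<Longrightarrow> \<bar>f x' - f u\<bar> < e"
        using c[of u] e unfolding continuous_at_real_range by blast
      obtain q where q: "q \<in> \<rat>" "u < q" "q < u + d" using Rats_dense_in_real[of u "u + d"] d by auto
      have "\<bar>f q - f u\<bar> < e" using d(2)[of q] q by simp
      moreover have "f q \<le> (SUP q\<in>\<rat>. f q)" by (rule cSUP_upper[OF q(1) bq])
      ultimately show "f u \<le> (SUP q\<in>\<rat>. f q) + e" by linarith
    qed
  qed simp
qed

lemma hfun_le1: "t \<ge> 0 \<Longrightarrow> hfun s t u \<le> 1"
  using F_exp_01[of t s u] F_exp_01[of 1 0 u] unfolding hfun_def by (simp add: abs_le_iff)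


lemma Sup_unbdd_eq:
  fixes A B :: "real set"
  assumes "\<not> bdd_above A" "\<not> bdd_above B"
  shows "Sup A = Sup B"
proof -
  have "(\<lambda>z. \<forall>x\<in>A. x \<le> z) = (\<lambda>z. \<forall>x\<in>B. x \<le> z)"
    using assms by (auto simp: bdd_above_def fun_eq_iff)
  then show ?thesis unfolding Sup_real_def by simp
qed


lemma hfun_unbdd:
  assumes t: "t < 0"
  shows "\<not> bdd_above (range (hfun s t))"
proof
  assume "bdd_above (range (hfun s t))"
  then obtain z where z: "\<And>u. hfun s t u \<le> z" by (auto simp: bdd_above_def)
  define u where "u = s - t * ln (\<bar>z\<bar> + 3)"
  have l: "ln (\<bar>z\<bar> + 3) > 0" by simp
  have us: "u > s" using t l by (simp add: u_def mult_neg_pos)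
  have e: "- (u - s) / t = ln (\<bar>z\<bar> + 3)" using t by (simp add: u_def)
  have F1: "F_exp s t u = - \<bar>z\<bar> - 2" using us e by (simp add: F_exp_def)
  have F2: "0 \<le> F_exp 0 1 u" "F_exp 0 1 u \<le> 1" using F_exp_01[of 1 0 u] by auto
  have "hfun s t u \<ge> \<bar>z\<bar> + 2" using F1 F2 by (simp add: hfun_def)
  with z[of u] show False by simp
qed


lemma Kfun_alt: "Kfun s t = (if t < 0 then Sup (UNIV::real set) else SUP q\<in>\<rat>. min 1 (hfun s t q))"
proof (cases "t < 0")
  case True
  have "\<not> bdd_above (UNIV :: real set)" unfolding bdd_above_def by (metis gt_ex not_le UNIV_I)
  then have "(SUP u. hfun s t u) = Sup (UNIV::real set)" by (intro Sup_unbdd_eq hfun_unbdd[OF True])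
  then show ?thesis using True unfolding Kfun_def by simp
next
  case False
  then have "min 1 (hfun s t q) = hfun s t q" for q using hfun_le1[of t s q] by simp
  moreover have "(SUP q\<in>\<rat>. hfun s t q) = Kfun s t" unfolding Kfun_def
    by (rule SUP_rat[OF hfun_cont]) (use hfun_le1[of t s] False in \<open>auto intro!: bdd_aboveI[of _ 1]\<close>)
  ultimately show ?thesis using False by simp
qed


lemma hfun_meas[measurable]: "(\<lambda>p. hfun (fst p) (snd p) q) \<in> borel_measurable (borel \<Otimes>\<^sub>M borel)"
  unfolding hfun_def F_exp_def by measurable

lemma Kfun_meas[measurable]: "(\<lambda>p. Kfun (fst p) (snd p)) \<in> borel_measurable (borel \<Otimes>\<^sub>M borel)"
proof -
  have "(\<lambda>p. SUP q\<in>\<rat>. min 1 (hfun (fst p) (snd p) q)) \<in> borel_measurable (borel \<Otimes>\<^sub>M borel)"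
    by (rule borel_measurable_cSUP) (auto simp: countable_rat intro: bdd_aboveI[of _ 1])
  then show ?thesis unfolding Kfun_alt by measurable
qed


lemma F_exp_scale:
  assumes s: "\<sigma> > 0"
  shows "F_exp a b t = F_exp ((a - \<mu>) / \<sigma>) (b / \<sigma>) ((t - \<mu>) / \<sigma>)"
proof -
  have "max ((t - \<mu>) / \<sigma>) ((a - \<mu>) / \<sigma>) - (a - \<mu>) / \<sigma> = (max t a - a) / \<sigma>"
    using s by (auto simp: max_def divide_right_mono field_simps)
  moreover have "(max t a - a) / \<sigma> * (- 1 / (b / \<sigma>)) = (max t a - a) * (- 1 / b)"
    using s by (cases "b = 0") (auto simp: field_simps)
  ultimately show ?thesis unfolding F_exp_max2 using s by simp
qed

lemma K_eq:
  assumes s: "\<sigma> > 0"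
  shows "K_stat m R \<mu> \<sigma> x = Kfun ((x 1 - \<mu>) / \<sigma>) (sigma_hat m R x / \<sigma>)"
proof -
  define h where "h = hfun ((x 1 - \<mu>) / \<sigma>) (sigma_hat m R x / \<sigma>)"
  have "\<bar>F_exp (mu_hat x) (sigma_hat m R x) t - F_exp \<mu> \<sigma> t\<bar> = h ((t - \<mu>) / \<sigma>)" for t
    unfolding h_def hfun_def mu_hat_def
    using F_exp_scale[OF s, of "x 1" "sigma_hat m R x" t \<mu>] F_exp_scale[OF s, of \<mu> \<sigma> t \<mu>] s by simp
  then have "K_stat m R \<mu> \<sigma> x = Sup (h ` ((\<lambda>t. (t - \<mu>) / \<sigma>) ` UNIV))"
    unfolding K_stat_def by (simp add: image_image)
  also have "(\<lambda>t. (t - \<mu>) / \<sigma>) ` UNIV = UNIV"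
  proof -
    have "u = (\<mu> + \<sigma> * u - \<mu>) / \<sigma>" for u using s by simp
    then show ?thesis by blast
  qed
  finally show ?thesis unfolding Kfun_def h_def by simp
qed

lemma sh_meas: "(\<lambda>x. sigma_hat m R x) \<in> borel_measurable (PiM {1..m} (\<lambda>_. lborel))"
proof -
  have "(\<lambda>x. \<Sum>j=2..m. pc_gamma m R j * (x j - x (j - 1))) \<in> borel_measurable (PiM {1..m} (\<lambda>_. lborel))"
  proof (rule borel_measurable_sum)
    fix j assume j: "j \<in> {2..m}"
    then have [measurable]: "(\<lambda>x. x j :: real) \<in> borel_measurable (PiM {1..m} (\<lambda>_. lborel))"
      "(\<lambda>x. x (j - 1) :: real) \<in> borel_measurable (PiM {1..m} (\<lambda>_. lborel))"
      by (auto intro!: comp_meas simp del: One_nat_def)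
    show "(\<lambda>x. pc_gamma m R j * (x j - x (j - 1))) \<in> borel_measurable (PiM {1..m} (\<lambda>_. lborel))"
      by measurable
  qed
  then show ?thesis unfolding sigma_hat_def by measurable
qed

lemma ST_meas:
  assumes "1 \<le> m"
  shows "(\<lambda>x. ((x 1 - \<mu>) / \<sigma>, sigma_hat m R x / \<sigma>)) \<in> measurable (pc_sample m R \<mu> \<sigma>) (borel \<Otimes>\<^sub>M borel)"
proof -
  have [measurable]: "(\<lambda>x. x 1 :: real) \<in> borel_measurable (PiM {1..m} (\<lambda>_. lborel))"
    using assms by (intro comp_meas) auto
  note sh_meas[measurable]
  show ?thesis unfolding pc_sample_def by measurable
qed


definition Gfun :: "real \<times> real \<Rightarrow> real" where
  "Gfun p = max (U_fun (fst p)) (V_fun (fst p) (snd p))"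

lemma Gfun_meas[measurable]: "Gfun \<in> borel_measurable (borel \<Otimes>\<^sub>M borel)"
  unfolding Gfun_def[abs_def] U_fun_def V_fun_def of_bool_def by measurable

lemma ST_AE:
  assumes m: "1 < m" and n: "0 < n"
  shows "AE p in ST_law m n. fst p > 0 \<and> snd p > 0 \<and> snd p \<noteq> 1"
proof -
  interpret pair_sigma_finite "density lborel (exponential_density (real n))" "density lborel (erlang_density (m - 2) (real m))"
    unfolding pair_sigma_finite_def
    using prob_space_exponential_density[of "real n"] prob_space_erlang_density[of "real m" "m - 2"] m n
    by (auto intro: prob_space_imp_sigma_finite)
  show ?thesis unfolding ST_law_def
  proof (rule AE_pair_measure)
    show "{x \<in> space (density lborel (exponential_density (real n)) \<Otimes>\<^sub>M density lborel (erlang_density (m - 2) (real m))).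
        0 < fst x \<and> 0 < snd x \<and> snd x \<noteq> 1} \<in> sets (density lborel (exponential_density (real n)) \<Otimes>\<^sub>M density lborel (erlang_density (m - 2) (real m)))"
      by measurable
    have A1: "AE s in density lborel (exponential_density (real n)). s > 0"
    proof (subst AE_density)
      show "AE x in lborel. 0 < ennreal (exponential_density (real n) x) \<longrightarrow> x > 0"
        using AE_lborel_singleton[of 0] by eventually_elim (auto simp: exponential_density_def)
    qed measurable
    have A2: "AE t in density lborel (erlang_density (m - 2) (real m)). t > 0 \<and> t \<noteq> 1"
    proof (subst AE_density)
      show "AE x in lborel. 0 < ennreal (erlang_density (m - 2) (real m) x) \<longrightarrow> x > 0 \<and> x \<noteq> 1"
        using AE_lborel_singleton[of 0] AE_lborel_singleton[of 1] by eventually_elim (auto simp: erlang_density_def)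
    qed measurable
    show "AE x in density lborel (exponential_density (real n)). AE y in density lborel (erlang_density (m - 2) (real m)).
        0 < fst (x, y) \<and> 0 < snd (x, y) \<and> snd (x, y) \<noteq> 1"
      using A1 by eventually_elim (use A2 in auto)
  qed
qed


lemma part2:
  assumes m: "1 < m" and mn: "m \<le> n" and sR: "(\<Sum>j=1..m. R j) = n - m" and s: "\<sigma> > 0"
  shows "distr (pc_sample m R \<mu> \<sigma>) borel (K_stat m R \<mu> \<sigma>) = maxUV_law m n"
proof -
  define ST where "ST x = ((x 1 - \<mu>) / \<sigma>, sigma_hat m R x / \<sigma>)" for x
  define Kf where "Kf p = Kfun (fst p) (snd p)" for p
  have STm: "ST \<in> measurable (pc_sample m R \<mu> \<sigma>) (borel \<Otimes>\<^sub>M borel)"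
    unfolding ST_def[abs_def] using ST_meas m by simp
  have Kfm: "Kf \<in> borel_measurable (borel \<Otimes>\<^sub>M borel)" unfolding Kf_def[abs_def] by measurable
  have "distr (pc_sample m R \<mu> \<sigma>) borel (K_stat m R \<mu> \<sigma>) = distr (pc_sample m R \<mu> \<sigma>) borel (Kf \<circ> ST)"
    by (rule distr_cong) (auto simp: K_eq[OF s] Kf_def ST_def)
  also have "\<dots> = distr (distr (pc_sample m R \<mu> \<sigma>) (borel \<Otimes>\<^sub>M borel) ST) borel Kf"
    by (rule distr_distr[symmetric, OF Kfm STm])
  also have "distr (pc_sample m R \<mu> \<sigma>) (borel \<Otimes>\<^sub>M borel) ST = ST_law m n"
    unfolding ST_def[abs_def] by (rule ST_law_eq[OF m mn sR s])
  also have "distr (ST_law m n) borel Kf = distr (ST_law m n) borel Gfun"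
  proof (rule distr_cong_AE)
    show "AE x in ST_law m n. Kf x = Gfun x"
    proof -
      have "0 < n" using m mn by simp
      from ST_AE[OF m this] show ?thesis by eventually_elim (unfold Kf_def Gfun_def, rule Kfun_eq, auto)
    qed
    have e: "sets (ST_law m n) = sets (borel \<Otimes>\<^sub>M borel)" unfolding ST_law_def
      by (intro sets_pair_measure_cong) auto
    show "Kf \<in> borel_measurable (ST_law m n)" unfolding measurable_cong_sets[OF e refl] by (rule Kfm)
    show "Gfun \<in> borel_measurable (ST_law m n)" unfolding measurable_cong_sets[OF e refl] by (rule Gfun_meas)
  qed auto
  also have "\<dots> = maxUV_law m n"
    unfolding maxUV_law_def Gfun_def by (rule distr_cong) (auto simp: split_beta)
  finally show ?thesis .
qed


lemma quantile_cont:
  assumes M: "real_distribution M" and na: "\<And>x. measure M {x} = 0" and q: "0 < q" "q < 1"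
  shows "cdf M (quantile M q) = q"
proof -
  interpret real_distribution M by (rule M)
  define S where "S = {d. q \<le> cdf M d}"
  have cont: "\<And>x. isCont (cdf M) x" using na by (simp add: isCont_cdf)
  then have cont_on: "continuous_on UNIV (cdf M)" by (simp add: continuous_at_imp_continuous_on)
  have "eventually (\<lambda>x. q < cdf M x) at_top" using order_tendstoD(1)[OF cdf_lim_at_top_prob q(2)] .
  then obtain N where "\<And>x. x \<ge> N \<Longrightarrow> q < cdf M x" by (auto simp: eventually_at_top_linorder)
  then have ne: "S \<noteq> {}" unfolding S_def by (auto intro!: exI[of _ N] less_imp_le)
  have "eventually (\<lambda>x. cdf M x < q) at_bot" using order_tendstoD(2)[OF cdf_lim_at_bot q(1)] .
  then obtain N' where N': "\<And>x. x \<le> N' \<Longrightarrow> cdf M x < q" by (auto simp: eventually_at_bot_linorder)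
  have bdd: "bdd_below S" unfolding S_def bdd_below_def
  proof (rule exI[of _ N'], rule ballI)
    fix x assume "x \<in> {d. q \<le> cdf M d}"
    then show "N' \<le> x" using N'[of x] by (cases "x \<le> N'") auto
  qed
  have cl: "closed S" unfolding S_def by (intro closed_Collect_le continuous_on_const cont_on)
  have I: "Inf S \<in> S" by (rule closed_contains_Inf[OF ne bdd cl])
  then have ge: "q \<le> cdf M (Inf S)" by (simp add: S_def)
  have le: "cdf M (Inf S) \<le> q"
  proof (rule ccontr)
    assume "\<not> cdf M (Inf S) \<le> q"
    then have e: "cdf M (Inf S) - q > 0" by simp
    obtain d where d: "d > 0" "\<And>x'. norm (x' - Inf S) < d \<Longrightarrow> \<bar>cdf M x' - cdf M (Inf S)\<bar> < cdf M (Inf S) - q"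
      using cont[of "Inf S"] e unfolding continuous_at_real_range by blast
    have "\<bar>cdf M (Inf S - d / 2) - cdf M (Inf S)\<bar> < cdf M (Inf S) - q" using d by (intro d(2)) simp
    then have "Inf S - d / 2 \<in> S" by (simp add: S_def)
    then have "Inf S \<le> Inf S - d / 2" by (rule cInf_lower[OF _ bdd])
    then show False using d by simp
  qed
  show ?thesis unfolding quantile_def S_def[symmetric] using ge le by simp
qed


lemma G_solve:
  assumes s: "s > 0" and t0: "t > 0" and G: "Gfun (s, t) = c"
  shows "s = - ln (1 - c) \<or> s = (t - 1) * ln (c / \<bar>1 - t\<bar>) + t * ln t"
proof (cases "V_fun s t \<le> U_fun s")
  case True
  then have "1 - exp (- s) = c" using G by (simp add: Gfun_def U_fun_def)
  then have "exp (- s) = 1 - c" by simp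
  then have "- s = ln (1 - c)" by (metis ln_exp)
  then show ?thesis by simp
next
  case False
  then have Vc: "V_fun s t = c" using G by (simp add: Gfun_def)
  have U0: "U_fun s > 0" using s by (simp add: U_fun_def)
  then have c0: "c > 0" using False Vc by simp
  have ind: "(t < 1 \<and> \<not> s < ln t) \<or> (\<not> t < 1 \<and> s < ln t)"
  proof -
    have "t < 1 \<or> s < ln t" using Vc c0 by (cases "t < 1"; cases "s < ln t") (auto simp: V_fun_def)
    moreover have "t < 1 \<Longrightarrow> ln t \<le> 0" using t0 by simp
    ultimately show ?thesis using s by auto
  qed
  have eq: "\<bar>1 - t\<bar> * exp ((s - t * ln t) / (t - 1)) = c" using Vc ind by (auto simp: V_fun_def)
  then have t1: "t \<noteq> 1" using c0 by auto
  then have a: "\<bar>1 - t\<bar> > 0" by simp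
  have "exp ((s - t * ln t) / (t - 1)) = c / \<bar>1 - t\<bar>" using eq a by (simp add: field_simps)
  then have "(s - t * ln t) / (t - 1) = ln (c / \<bar>1 - t\<bar>)" by (metis ln_exp)
  then have "s - t * ln t = (t - 1) * ln (c / \<bar>1 - t\<bar>)" using t1 by (simp add: field_simps)
  then show ?thesis by simp
qed

lemma AE_exp_pos: "0 < n \<Longrightarrow> AE s in density lborel (exponential_density (real n)). s > 0"
proof (subst AE_density)
  show "AE x in lborel. 0 < ennreal (exponential_density (real n) x) \<longrightarrow> x > 0"
    using AE_lborel_singleton[of 0] by eventually_elim (auto simp: exponential_density_def)
qed measurable

lemma AE_density_lborel: "AE x in lborel. P x \<Longrightarrow> f \<in> borel_measurable borel \<Longrightarrow> AE x in density lborel f. P x"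
  by (subst AE_density) (auto elim: AE_mp)

lemma maxUV_noatom:
  assumes m: "1 < m" and n: "0 < n"
  shows "measure (maxUV_law m n) {c} = 0"
proof -
  define M1 where "M1 = density lborel (exponential_density (real n))"
  define M2 where "M2 = density lborel (erlang_density (m - 2) (real m))"
  interpret pair_sigma_finite M1 M2
    unfolding pair_sigma_finite_def M1_def M2_def
    using prob_space_exponential_density[of "real n"] prob_space_erlang_density[of "real m" "m - 2"] m n
    by (auto intro: prob_space_imp_sigma_finite)
  have ST: "ST_law m n = M1 \<Otimes>\<^sub>M M2" by (simp add: ST_law_def M1_def M2_def)
  have sets: "sets (M1 \<Otimes>\<^sub>M M2) = sets (borel \<Otimes>\<^sub>M borel)" unfolding M1_def M2_def
    by (intro sets_pair_measure_cong) auto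
  have Gm: "Gfun \<in> borel_measurable (M1 \<Otimes>\<^sub>M M2)" unfolding measurable_cong_sets[OF sets refl] by (rule Gfun_meas)
  have L: "maxUV_law m n = distr (M1 \<Otimes>\<^sub>M M2) borel Gfun"
    unfolding maxUV_law_def ST Gfun_def by (rule distr_cong) (auto simp: split_beta)
  have P: "{x \<in> space (M1 \<Otimes>\<^sub>M M2). Gfun (fst x, snd x) \<noteq> c} \<in> sets (M1 \<Otimes>\<^sub>M M2)"
    using Gm by simp
  have inner: "AE s in M1. Gfun (s, t) \<noteq> c" if t0: "t > 0" for t
  proof -
    have "AE s in M1. s \<noteq> - ln (1 - c) \<and> s \<noteq> (t - 1) * ln (c / \<bar>1 - t\<bar>) + t * ln t"
      unfolding M1_def
      by (intro AE_density_lborel) (use AE_lborel_singleton[of "- ln (1 - c)"] AE_lborel_singleton[of "(t - 1) * ln (c / \<bar>1 - t\<bar>) + t * ln t"] in \<open>auto elim: AE_mp\<close>)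
    moreover have "AE s in M1. s > 0" unfolding M1_def by (rule AE_exp_pos[OF n])
    ultimately show ?thesis by eventually_elim (use G_solve t0 in blast)
  qed
  have "AE t in M2. t > 0" unfolding M2_def
  proof (subst AE_density)
    show "AE x in lborel. 0 < ennreal (erlang_density (m - 2) (real m) x) \<longrightarrow> x > 0"
      using AE_lborel_singleton[of 0] by eventually_elim (auto simp: erlang_density_def)
  qed measurable
  then have "AE t in M2. AE s in M1. Gfun (s, t) \<noteq> c" using inner by (auto elim: AE_mp)
  then have "AE s in M1. AE t in M2. Gfun (s, t) \<noteq> c" using AE_commute[of "\<lambda>s t. Gfun (s, t) \<noteq> c"] P by simp
  then have AEp: "AE p in M1 \<Otimes>\<^sub>M M2. Gfun p \<noteq> c" using AE_pair_measure[of "\<lambda>p. Gfun p \<noteq> c"] P by simp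
  have "emeasure (M1 \<Otimes>\<^sub>M M2) (Gfun -` {c} \<inter> space (M1 \<Otimes>\<^sub>M M2)) = 0"
  proof (rule AE_iff_measurable[THEN iffD1, OF _ _ AEp])
    show "Gfun -` {c} \<inter> space (M1 \<Otimes>\<^sub>M M2) \<in> sets (M1 \<Otimes>\<^sub>M M2)" using Gm by (rule measurable_sets) simp
  qed auto
  then show ?thesis unfolding L measure_def by (subst emeasure_distr[OF Gm]) auto
qed


lemma forall_rat:
  fixes g :: "real \<Rightarrow> real"
  assumes c: "\<And>u. continuous (at u) g"
  shows "(\<forall>t. g t \<le> d) \<longleftrightarrow> (\<forall>q\<in>\<rat>. g q \<le> d)"
proof safe
  fix t assume H: "\<forall>q\<in>\<rat>. g q \<le> d"
  show "g t \<le> d"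
  proof (rule ccontr)
    assume "\<not> g t \<le> d"
    then have e: "g t - d > 0" by simp
    obtain r where r: "r > 0" "\<And>x'. norm (x' - t) < r \<Longrightarrow> \<bar>g x' - g t\<bar> < g t - d"
      using c[of t] e unfolding continuous_at_real_range by blast
    obtain q where q: "q \<in> \<rat>" "t < q" "q < t + r" using Rats_dense_in_real[of t "t + r"] r by auto
    have "\<bar>g q - g t\<bar> < g t - d" using r(2)[of q] q by simp
    moreover have "g q \<le> d" using H q by simp
    ultimately show False by simp
  qed
qed auto

lemma band_iff: "fgraph F \<subseteq> band4 m R d x \<longleftrightarrow> (\<forall>t. \<bar>F_exp (mu_hat x) (sigma_hat m R x) t - F t\<bar> \<le> d)"
  unfolding fgraph_def band4_def by auto

lemma K_meas:
  assumes m: "1 \<le> m" and s: "\<sigma> > 0"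
  shows "K_stat m R \<mu> \<sigma> \<in> borel_measurable (pc_sample m R \<mu> \<sigma>)"
proof -
  have "(\<lambda>p. Kfun (fst p) (snd p)) \<circ> (\<lambda>x. ((x 1 - \<mu>) / \<sigma>, sigma_hat m R x / \<sigma>)) \<in> borel_measurable (pc_sample m R \<mu> \<sigma>)"
    by (rule measurable_comp[OF ST_meas[OF m] Kfun_meas])
  moreover have "K_stat m R \<mu> \<sigma> = (\<lambda>p. Kfun (fst p) (snd p)) \<circ> (\<lambda>x. ((x 1 - \<mu>) / \<sigma>, sigma_hat m R x / \<sigma>))"
    by (auto simp: K_eq[OF s] fun_eq_iff)
  ultimately show ?thesis by simp
qed

lemma part3:
  assumes m: "1 < m" and mn: "m \<le> n" and sR: "(\<Sum>j=1..m. R j) = n - m" and p: "0 < p" "p < 1"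
  shows "exact_conf_band (pc_sample m R) F_exp
              (band4 m R (quantile (distr (pc_sample m R 0 1) borel (K_stat m R 0 1)) (1 - p)))
              (1 - p)"
proof -
  define d where "d = quantile (distr (pc_sample m R 0 1) borel (K_stat m R 0 1)) (1 - p)"
  have n: "0 < n" using m mn by simp
  have L01: "distr (pc_sample m R 0 1) borel (K_stat m R 0 1) = maxUV_law m n"
    by (rule part2[OF m mn sR]) simp
  have RD: "real_distribution (maxUV_law m n)"
  proof -
    interpret prob_space "pc_sample m R 0 1" by (rule prob_pc) simp
    show ?thesis unfolding L01[symmetric] using K_meas[of m 1 R 0] m by (intro real_distribution_distr) auto
  qed
  have cd: "cdf (maxUV_law m n) d = 1 - p"
    unfolding d_def L01 by (rule quantile_cont[OF RD maxUV_noatom[OF m n]]) (use p in auto)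
  show ?thesis
    unfolding exact_conf_band_def d_def[symmetric]
  proof (intro allI impI conjI)
    fix \<mu> \<sigma> :: real assume s: "\<sigma> > 0"
    define P where "P = pc_sample m R \<mu> \<sigma>"
    interpret Q: prob_space P unfolding P_def by (rule prob_pc[OF s])
    have x1m[measurable]: "(\<lambda>x. x 1 :: real) \<in> borel_measurable P"
      unfolding P_def pc_sample_def using m by (simp add: comp_meas)
    have shm[measurable]: "(\<lambda>x. sigma_hat m R x) \<in> borel_measurable P"
      unfolding P_def pc_sample_def using sh_meas by simp
    have eqA: "{x \<in> space P. fgraph (F_exp \<mu> \<sigma>) \<subseteq> band4 m R d x} =
        {x \<in> space P. \<forall>q\<in>\<rat>. \<bar>F_exp (x 1) (sigma_hat m R x) q - F_exp \<mu> \<sigma> q\<bar> \<le> d}"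
    proof -
      have "(\<forall>t. \<bar>F_exp (x 1) (sigma_hat m R x) t - F_exp \<mu> \<sigma> t\<bar> \<le> d) \<longleftrightarrow>
          (\<forall>q\<in>\<rat>. \<bar>F_exp (x 1) (sigma_hat m R x) q - F_exp \<mu> \<sigma> q\<bar> \<le> d)" for x
        by (rule forall_rat) (intro continuous_intros F_exp_cont)
      then show ?thesis unfolding band_iff mu_hat_def by simp
    qed
    have Am: "{x \<in> space P. fgraph (F_exp \<mu> \<sigma>) \<subseteq> band4 m R d x} \<in> sets P"
    proof -
      have "Measurable.pred P (\<lambda>x. \<forall>r::rat. \<bar>F_exp (x 1) (sigma_hat m R x) (of_rat r) - F_exp \<mu> \<sigma> (of_rat r)\<bar> \<le> d)"
        unfolding F_exp_def by measurable
      moreover have "(\<forall>q\<in>\<rat>. \<bar>F_exp (x 1) (sigma_hat m R x) q - F_exp \<mu> \<sigma> q\<bar> \<le> d) \<longleftrightarrow>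
          (\<forall>r::rat. \<bar>F_exp (x 1) (sigma_hat m R x) (of_rat r) - F_exp \<mu> \<sigma> (of_rat r)\<bar> \<le> d)" for x
        unfolding Rats_def by auto
      ultimately show ?thesis unfolding eqA pred_def by simp
    qed
    show "{x \<in> space (pc_sample m R \<mu> \<sigma>). fgraph (F_exp \<mu> \<sigma>) \<subseteq> band4 m R d x} \<in> sets (pc_sample m R \<mu> \<sigma>)"
      using Am unfolding P_def .
    show "AE x in pc_sample m R \<mu> \<sigma>. \<forall>t. is_interval {y. (t, y) \<in> band4 m R d x}"
    proof (rule AE_I2, rule allI)
      fix x t
      have "{y. (t, y) \<in> band4 m R d x} = {F_exp (mu_hat x) (sigma_hat m R x) t - d .. F_exp (mu_hat x) (sigma_hat m R x) t + d}"
        unfolding band4_def by (auto simp: abs_le_iff)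
      then show "is_interval {y. (t, y) \<in> band4 m R d x}" by (simp add: is_interval_cc)
    qed
    have Km: "K_stat m R \<mu> \<sigma> \<in> borel_measurable P" unfolding P_def using K_meas[OF _ s] m by simp
    have STm: "(\<lambda>x. ((x 1 - \<mu>) / \<sigma>, sigma_hat m R x / \<sigma>)) \<in> measurable P (borel \<Otimes>\<^sub>M borel)"
      unfolding P_def using ST_meas m by simp
    have AEsh: "AE x in P. sigma_hat m R x > 0"
    proof -
      have "AE x in distr P (borel \<Otimes>\<^sub>M borel) (\<lambda>x. ((x 1 - \<mu>) / \<sigma>, sigma_hat m R x / \<sigma>)). snd x > 0"
        unfolding P_def ST_law_eq[OF m mn sR s] using ST_AE[OF m n] by eventually_elim auto
      from AE_distrD[OF STm this] show ?thesis by eventually_elim (use s in \<open>simp add: zero_less_divide_iff\<close>)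
    qed
    have Bm: "{x \<in> space P. K_stat m R \<mu> \<sigma> x \<le> d} \<in> sets P" using Km by measurable
    have "measure P {x \<in> space P. fgraph (F_exp \<mu> \<sigma>) \<subseteq> band4 m R d x} = measure P {x \<in> space P. K_stat m R \<mu> \<sigma> x \<le> d}"
    proof (rule measure_eq_AE[OF _ Am Bm])
      show "AE x in P. (x \<in> {x \<in> space P. fgraph (F_exp \<mu> \<sigma>) \<subseteq> band4 m R d x}) = (x \<in> {x \<in> space P. K_stat m R \<mu> \<sigma> x \<le> d})"
        using AEsh
      proof eventually_elim
        case (elim x)
        have bdd: "bdd_above (range (\<lambda>t. \<bar>F_exp (mu_hat x) (sigma_hat m R x) t - F_exp \<mu> \<sigma> t\<bar>))"
        proof (rule bdd_aboveI[of _ 1])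
          fix y assume "y \<in> range (\<lambda>t. \<bar>F_exp (mu_hat x) (sigma_hat m R x) t - F_exp \<mu> \<sigma> t\<bar>)"
          then obtain t where "y = \<bar>F_exp (mu_hat x) (sigma_hat m R x) t - F_exp \<mu> \<sigma> t\<bar>" by auto
          then show "y \<le> 1" using F_exp_01[of "sigma_hat m R x" "mu_hat x" t] F_exp_01[of \<sigma> \<mu> t] elim s
            by (simp add: abs_le_iff)
        qed
        have "K_stat m R \<mu> \<sigma> x \<le> d \<longleftrightarrow> (\<forall>t. \<bar>F_exp (mu_hat x) (sigma_hat m R x) t - F_exp \<mu> \<sigma> t\<bar> \<le> d)"
          unfolding K_stat_def using cSUP_le_iff[OF _ bdd, of d] by simp
        then show ?case unfolding band_iff by simp
      qed
    qed
    also have "\<dots> = measure (distr P borel (K_stat m R \<mu> \<sigma>)) {..d}"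
      by (subst measure_distr[OF Km]) (auto intro!: arg_cong[where f="measure P"])
    also have "distr P borel (K_stat m R \<mu> \<sigma>) = maxUV_law m n" unfolding P_def by (rule part2[OF m mn sR s])
    also have "measure (maxUV_law m n) {..d} = 1 - p" using cd by (simp add: cdf_def)
    finally show "measure (pc_sample m R \<mu> \<sigma>) {x \<in> space (pc_sample m R \<mu> \<sigma>). fgraph (F_exp \<mu> \<sigma>) \<subseteq> band4 m R d x} = 1 - p"
      unfolding P_def .
  qed
qed

theorem theorem3:
  fixes m n :: nat and R :: "nat \<Rightarrow> nat" and p :: real
  assumes "1 < m" and "m \<le> n" and "(\<Sum>j=1..m. R j) = n - m"
  shows "(\<forall>\<mu> \<sigma> \<mu>' \<sigma>'. \<sigma> > 0 \<longrightarrow> \<sigma>' > 0 \<longrightarrow>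
            distr (pc_sample m R \<mu> \<sigma>) borel (K_stat m R \<mu> \<sigma>) =
            distr (pc_sample m R \<mu>' \<sigma>') borel (K_stat m R \<mu>' \<sigma>'))
       \<and> (\<forall>\<mu> \<sigma>. \<sigma> > 0 \<longrightarrow>
            distr (pc_sample m R \<mu> \<sigma>) borel (K_stat m R \<mu> \<sigma>) = maxUV_law m n)
       \<and> (0 < p \<longrightarrow> p < 1 \<longrightarrow>
            exact_conf_band (pc_sample m R) F_exp
              (band4 m R (quantile (distr (pc_sample m R 0 1) borel (K_stat m R 0 1)) (1 - p)))
              (1 - p))"
  using part2[OF assms] part3[OF assms] by auto


end
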